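(* Let $t,u$ be indeterminates. For every integer $n\ge1$, $$\sum_{|\lambda|=n} t^{2n(\lambda)-2\binom{\ell(\lambda)}{2}}\,\frac{(t;t)_{\ell(\lambda)-1}\,(u^{-1};t)_{\ell(\lambda)}}{\prod_{i\ge1}(t;t)_{m_i(\lambda)}}\,u^{\ell(\lambda)}=\frac{u^n-1}{1-t^n},$$ the sum being over all partitions $\lambda$ of $n$.
   Context: For a partition $\lambda$: $|\lambda|=\sum_i\lambda_i$, $\ell(\lambda)$ is the number of nonzero parts, $n(\lambda)=\sum_{i\ge1}(i-1)\lambda_i$, and $m_j(\lambda)=\#\{i:\lambda_i=j\}$. $(x;t)_m=\prod_{i=1}^m(1-xt^{i-1})$ with $(x;t)_0=1$. *)

theory Defs
  imports Complex_Main
begin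

definition partitions_of :: "nat \<Rightarrow> nat list set" where
  "partitions_of n = {xs. sorted_wrt (\<ge>) xs \<and> (\<forall>x\<in>set xs. 0 < x) \<and> sum_list xs = n}"

text \<open>n(lambda) = sum_{i>=1} (i-1) lambda_i (0-based list index i).\<close>
definition npart :: "nat list \<Rightarrow> nat" where
  "npart xs = (\<Sum>i<length xs. i * xs ! i)"

definition mult_part :: "nat list \<Rightarrow> nat \<Rightarrow> nat" where
  "mult_part xs j = count_list xs j"

definition qpoch :: "'a::comm_ring_1 \<Rightarrow> 'a \<Rightarrow> nat \<Rightarrow> 'a" where
  "qpoch x q m = (\<Prod>i<m. (1 - x * q ^ i))"

end

theory Submission
  imports Defs
begin


fun qbin :: "complex \<Rightarrow> nat \<Rightarrow> nat \<Rightarrow> complex" where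
  "qbin t 0 k = (if k = 0 then 1 else 0)"
| "qbin t (Suc n) k = (if k = 0 then 1 else qbin t n (k - 1) + t ^ k * qbin t n k)"

lemma qbin_gt: "n < k \<Longrightarrow> qbin t n k = 0"
  by (induction n arbitrary: k) auto

lemma qbin_0[simp]: "qbin t n 0 = 1"
  by (cases n) auto

lemma qbin_Suc_Suc: "qbin t (Suc n) (Suc k) = qbin t n k + t ^ Suc k * qbin t n (Suc k)"
  by simp

lemma qbin_nn[simp]: "qbin t n n = 1"
  by (induction n) (auto simp: qbin_gt)

lemma qpoch_0[simp]: "qpoch x q 0 = 1" by (simp add: qpoch_def)

lemma lincomb: "(L::complex) = X1 + tj*X2 + ti1*A \<Longrightarrow> A = Y1 + tj'*X1 \<Longrightarrow> R = B + tj*C \<Longrightarrow> B = X1 + ti1*Y1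
   \<Longrightarrow> C = X2 + ti*X1 \<Longrightarrow> ti1*tj' = tj*ti \<Longrightarrow> L = R"
  by (simp add: algebra_simps)

declare qbin.simps(2)[simp del]

lemma pascal2_aux: "\<forall>i j. i + j = m \<longrightarrow> qbin t (i+j+1) (i+1) = qbin t (i+j) (i+1) + t^j * qbin t (i+j) i"
proof (induction m)
  case 0
  then show ?case by (auto simp: qbin_gt)
next
  case (Suc m)
  show ?case
  proof (intro allI impI)
    fix i j assume ij: "i + j = Suc m"
    show "qbin t (i+j+1) (i+1) = qbin t (i+j) (i+1) + t^j * qbin t (i+j) i"
    proof (cases j)
      case 0
      then show ?thesis using ij by (simp add: qbin_gt)
    next
      case (Suc j')
      note j = Suc
      show ?thesis
      proof (cases i)
        case 0
        have ih: "qbin t (j'+1) 1 = qbin t j' 1 + t^j'" using Suc.IH[rule_format, of 0 j'] ij 0 j by simp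
        have a: "qbin t (Suc j) 1 = 1 + t * qbin t j 1" using qbin_Suc_Suc[of t j 0] by simp
        have b: "qbin t (Suc j') 1 = 1 + t * qbin t j' 1" using qbin_Suc_Suc[of t j' 0] by simp
        show ?thesis using 0 j ih a b by (simp add: algebra_simps)
      next
        case (Suc i')
        have ih1: "qbin t (i'+j+1) (i'+1) = qbin t (i'+j) (i'+1) + t^j * qbin t (i'+j) i'"
          using Suc.IH[rule_format, of i' j] ij Suc by simp
        have ih2: "qbin t (i+j'+1) (i+1) = qbin t (i+j') (i+1) + t^j' * qbin t (i+j') i"
          using Suc.IH[rule_format, of i j'] ij j by simp
        have e1: "qbin t (i+j+1) (i+1) = qbin t (i+j) i + t^(i+1) * qbin t (i+j) (i+1)"
          using qbin_Suc_Suc[of t "i+j" i] by simp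
        have e6: "i' + j = i + j'" using Suc j by simp
        have e4: "qbin t (i+j) (i+1) = qbin t (i+j') i + t^(i+1) * qbin t (i+j') (i+1)"
          using qbin_Suc_Suc[of t "i+j'" i] j by simp
        have e5: "qbin t (i+j) i = qbin t (i+j') i' + t^i * qbin t (i+j') i"
          using qbin_Suc_Suc[of t "i+j'" i'] Suc j by simp
        have ih1': "qbin t (i+j) i = qbin t (i+j') i + t^j * qbin t (i+j') i'"
          using ih1 Suc e6 by simp
        have ih2': "qbin t (i+j) (i+1) = qbin t (i+j') (i+1) + t^j' * qbin t (i+j') i"
          using ih2 j by simp
        have pw0: "i+1+j' = j + i" using j by simp
        have pw: "t^(i+1) * t^j' = t^j * t^i" by (metis pw0 power_add)
        show ?thesis
          by (rule lincomb[OF _ ih2' _ e4 e5 pw]) (use e1 ih1' in auto)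
      qed
    qed
  qed
qed

lemma pascal2: "qbin t (i+j+1) (i+1) = qbin t (i+j) (i+1) + t^j * qbin t (i+j) i"
  using pascal2_aux by blast

lemma qbin_qpoch: "k \<le> n \<Longrightarrow> qbin t n k * qpoch t t k * qpoch t t (n-k) = qpoch t t n"
proof (induction n arbitrary: k)
  case 0
  then show ?case by (simp add: qpoch_def)
next
  case (Suc n)
  show ?case
  proof (cases k)
    case 0
    then show ?thesis by (simp add: qpoch_def)
  next
    case (Suc k')
    have a: "qbin t n k' * qpoch t t k' * qpoch t t (n-k') = qpoch t t n" using Suc.IH[of k'] Suc.prems Suc by simp
    have ps: "qpoch t t (Suc m) = qpoch t t m * (1 - t * t^m)" for m by (simp add: qpoch_def)
    show ?thesis
    proof (cases "k' = n")
      case True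
      then show ?thesis using Suc a by (simp add: qbin_gt ps)
    next
      case False
      then have kn: "Suc k' \<le> n" using Suc.prems Suc by simp
      have b: "qbin t n (Suc k') * qpoch t t (Suc k') * qpoch t t (n - Suc k') = qpoch t t n"
        using Suc.IH[OF kn] .
      have c: "n - k' = Suc (n - Suc k')" using kn by simp
      have "qbin t (Suc n) k * qpoch t t k * qpoch t t (Suc n - k)
          = qbin t n k' * qpoch t t k' * qpoch t t (n-k') * (1 - t*t^k')
            + t^Suc k' * (qbin t n (Suc k') * qpoch t t (Suc k') * qpoch t t (n - Suc k')) * (1 - t * t^(n - Suc k'))"
        using Suc c by (simp add: ps algebra_simps qbin_Suc_Suc)
      also have "\<dots> = qpoch t t n * (1 - t*t^k' + t^Suc k' * (1 - t * t^(n - Suc k')))"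
        unfolding a b by (simp add: algebra_simps)
      also have "\<dots> = qpoch t t (Suc n)"
      proof -
        have ee: "Suc k' + Suc (n - Suc k') = Suc n" using kn by simp
        have x: "t^Suc k' * (t * t^(n - Suc k')) = t * t^n"
          by (metis ee power_Suc power_add)
        have "1 - t*t^k' + t^Suc k' * (1 - t * t^(n - Suc k')) = 1 - t^Suc k' * (t * t^(n - Suc k'))"
          by (simp add: algebra_simps)
        then show ?thesis using x by (simp add: ps)
      qed
      finally show ?thesis .
    qed
  qed
qed

lemma gauss: "u ^ n = (\<Sum>k\<le>n. qbin t n k * (\<Prod>i<k. (u - t^i)))"
proof (induction n)
  case 0
  then show ?case by simp
next
  case (Suc n)
  define Q where "Q k = (\<Prod>i<k. (u - t^i))" for k
  have uQ: "u * Q k = Q (Suc k) + t^k * Q k" for k by (simp add: Q_def algebra_simps)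
  have "u ^ Suc n = (\<Sum>k\<le>n. qbin t n k * (u * Q k))"
    using Suc by (simp add: Q_def sum_distrib_left algebra_simps)
  also have "\<dots> = (\<Sum>k\<le>n. qbin t n k * Q (Suc k)) + (\<Sum>k\<le>n. qbin t n k * t^k * Q k)"
    by (simp add: uQ algebra_simps sum.distrib)
  also have "(\<Sum>k\<le>n. qbin t n k * Q (Suc k)) = (\<Sum>k\<le>Suc n. (if k = 0 then 0 else qbin t n (k-1)) * Q k)"
    by (subst sum.atMost_Suc_shift) simp
  also have "(\<Sum>k\<le>n. qbin t n k * t^k * Q k) = (\<Sum>k\<le>Suc n. qbin t n k * t^k * Q k)"
    by (simp add: qbin_gt)
  also have "(\<Sum>k\<le>Suc n. (if k = 0 then 0 else qbin t n (k-1)) * Q k) + (\<Sum>k\<le>Suc n. qbin t n k * t^k * Q k)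
     = (\<Sum>k\<le>Suc n. qbin t (Suc n) k * Q k)"
    by (subst sum.distrib[symmetric], rule sum.cong) (auto simp: algebra_simps qbin.simps(2))
  finally show ?case by (simp add: Q_def)
qed

lemma qbin_sym_aux: "\<forall>i j. i + j = m \<longrightarrow> qbin t (i+j) i = qbin t (i+j) j"
proof (induction m)
  case 0 then show ?case by simp
next
  case (Suc m)
  show ?case
  proof (intro allI impI)
    fix i j assume ij: "i + j = Suc m"
    show "qbin t (i+j) i = qbin t (i+j) j"
    proof (cases "i = 0 \<or> j = 0")
      case True then show ?thesis by auto
    next
      case False
      then obtain i' j' where i: "i = Suc i'" and j: "j = Suc j'" by (meson not0_implies_Suc)
      have a: "qbin t (i+j) i = qbin t (i'+j) i' + t^(i'+1) * qbin t (i'+j) i"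
        using qbin_Suc_Suc[of t "i'+j" i'] i by simp
      have b: "qbin t (j'+(i'+1)+1) (j'+1) = qbin t (j'+(i'+1)) (j'+1) + t^(i'+1) * qbin t (j'+(i'+1)) j'"
        by (rule pascal2)
      have c1: "qbin t (i'+j) i' = qbin t (i'+j) j"
        using Suc.IH[rule_format, of i' j] ij i by simp
      have c2: "qbin t (i+j') i = qbin t (i+j') j'"
        using Suc.IH[rule_format, of i j'] ij j by simp
      show ?thesis using a b c1 c2 i j by (simp add: ac_simps)
    qed
  qed
qed

lemma qbin_sym: "qbin t (i+j) i = qbin t (i+j) j"
  using qbin_sym_aux by blast

lemma W: "(\<Sum>i\<le>m. t^(i*(c+i)) * qbin t (c+d) (c+i) * qbin t m i) = qbin t (c+d+m) d"
proof (induction m arbitrary: c d)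
  case 0
  then show ?case using qbin_sym[of t c d] by simp
next
  case (Suc m)
  define f where "f i = t^(i*(c+i)) * qbin t (c+d) (c+i)" for i
  have split: "qbin t (Suc m) (Suc i) = qbin t m (Suc i) + t^(m-i) * qbin t m i" if "i \<le> m" for i
    using pascal2[of t i "m-i"] that by simp
  have "(\<Sum>i\<le>Suc m. f i * qbin t (Suc m) i) = f 0 + (\<Sum>i\<le>m. f (Suc i) * qbin t (Suc m) (Suc i))"
    by (subst sum.atMost_Suc_shift) simp
  also have "\<dots> = f 0 + (\<Sum>i\<le>m. f (Suc i) * qbin t m (Suc i)) + (\<Sum>i\<le>m. f (Suc i) * t^(m-i) * qbin t m i)"
    by (simp add: split sum.distrib algebra_simps)
  also have "f 0 + (\<Sum>i\<le>m. f (Suc i) * qbin t m (Suc i)) = (\<Sum>i\<le>m. f i * qbin t m i)"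
  proof -
    have "(\<Sum>i\<le>Suc m. f i * qbin t m i) = f 0 + (\<Sum>i\<le>m. f (Suc i) * qbin t m (Suc i))"
      by (subst sum.atMost_Suc_shift) simp
    moreover have "(\<Sum>i\<le>Suc m. f i * qbin t m i) = (\<Sum>i\<le>m. f i * qbin t m i)"
      by (simp add: qbin_gt)
    ultimately show ?thesis by simp
  qed
  also have "(\<Sum>i\<le>m. f i * qbin t m i) = qbin t (c+d+m) d"
    using Suc.IH[of c d] by (simp add: f_def)
  also have "(\<Sum>i\<le>m. f (Suc i) * t^(m-i) * qbin t m i)
      = t^(m+1+c) * (\<Sum>i\<le>m. t^(i*(Suc c+i)) * qbin t (c+d) (Suc c+i) * qbin t m i)"
    unfolding sum_distrib_left
  proof (rule sum.cong)
    fix i assume "i \<in> {..m}"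
    then have "Suc i * (c + Suc i) + (m - i) = (m+1+c) + i * (Suc c + i)"
      by (simp add: algebra_simps)
    then have e: "t^(Suc i * (c + Suc i)) * t^(m-i) = t^(m+1+c) * t^(i * (Suc c + i))"
      by (metis power_add)
    have "f (Suc i) * t^(m-i) * qbin t m i = (t^(Suc i * (c + Suc i)) * t^(m-i)) * (qbin t (c+d) (Suc c+i) * qbin t m i)"
      by (simp add: f_def ac_simps)
    also have "\<dots> = (t^(m+1+c) * t^(i * (Suc c + i))) * (qbin t (c+d) (Suc c+i) * qbin t m i)"
      by (simp only: e)
    finally show "f (Suc i) * t^(m-i) * qbin t m i = t^(m+1+c) * (t^(i*(Suc c+i)) * qbin t (c+d) (Suc c+i) * qbin t m i)"
      by (simp add: ac_simps)
  qed simp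
  finally have main: "(\<Sum>i\<le>Suc m. f i * qbin t (Suc m) i) = qbin t (c+d+m) d
       + t^(m+1+c) * (\<Sum>i\<le>m. t^(i*(Suc c+i)) * qbin t (c+d) (Suc c+i) * qbin t m i)" .
  show ?case
  proof (cases d)
    case 0
    have "(\<Sum>i\<le>Suc m. t^(i*(c+i)) * qbin t (c+d) (c+i) * qbin t (Suc m) i) = (\<Sum>i\<le>Suc m. if i = 0 then 1 else 0)"
      by (rule sum.cong) (auto simp: 0 qbin_gt)
    then show ?thesis unfolding 0 by simp
  next
    case (Suc d')
    have ih: "(\<Sum>i\<le>m. t^(i*(Suc c+i)) * qbin t (Suc c + d') (Suc c+i) * qbin t m i) = qbin t (Suc c+d'+m) d'"
      using Suc.IH[of "Suc c" d'] by simp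
    have p: "qbin t (d'+(c+1+m)+1) (d'+1) = qbin t (d'+(c+1+m)) (d'+1) + t^(c+1+m) * qbin t (d'+(c+1+m)) d'"
      by (rule pascal2)
    show ?thesis using main ih p Suc by (simp add: f_def algebra_simps)
  qed
qed



definition D :: "nat \<Rightarrow> nat \<Rightarrow> nat list set" where
  "D b N = {xs. length xs = b \<and> sorted_wrt (\<ge>) xs \<and> sum_list xs = N}"

definition wt :: "complex \<Rightarrow> nat list \<Rightarrow> complex" where
  "wt t xs = t ^ (2 * npart xs) / (\<Prod>i\<in>set xs. qpoch t t (count_list xs i))"

definition S :: "complex \<Rightarrow> nat \<Rightarrow> nat \<Rightarrow> complex" where
  "S t b N = (\<Sum>xs\<in>D b N. wt t xs)"

definition emb :: "nat \<Rightarrow> nat \<times> nat list \<Rightarrow> nat list" where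
  "emb b = (\<lambda>(k, zs). map Suc zs @ replicate (b - k) 0)"

lemma finite_D: "finite (D b N)"
proof (rule finite_subset)
  show "D b N \<subseteq> {xs. set xs \<subseteq> {..N} \<and> length xs = b}"
    by (auto simp: D_def member_le_sum_list)
qed (rule finite_lists_length_eq, simp)

lemma sum_list_map_Suc: "sum_list (map Suc zs) = sum_list zs + length zs"
  using sum_list_Suc[of "\<lambda>x. x" zs] by simp

lemma sorted_split: "sorted_wrt (\<ge>) (xs::nat list) \<Longrightarrow> xs = filter (\<lambda>x. 0 < x) xs @ replicate (count_list xs 0) 0"
proof (induction xs)
  case Nil
  then show ?case by simp
next
  case (Cons x xs)
  show ?case
  proof (cases "x = 0")
    case True
    then have "\<forall>y\<in>set xs. y = 0" using Cons.prems by auto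
    then have "xs = replicate (length xs) 0" by (simp add: replicate_length_same)
    moreover have "filter (\<lambda>x. 0 < x) xs = []" using \<open>\<forall>y\<in>set xs. y = 0\<close> by (simp add: filter_empty_conv)
    moreover have "count_list xs 0 = length xs"
      using \<open>\<forall>y\<in>set xs. y = 0\<close> by (induction xs) auto
    ultimately have "x # xs = [] @ replicate (Suc (count_list xs 0)) 0" using True by simp
    then show ?thesis using True \<open>filter (\<lambda>x. 0 < x) xs = []\<close> by simp
  next
    case False
    then show ?thesis using Cons by simp
  qed
qed

lemma filter_pos_emb: "filter (\<lambda>x. 0 < x) (map Suc zs @ replicate r 0) = map Suc zs"
  by (induction zs) auto

lemma filter_pos_Suc': "map Suc (map (\<lambda>x. x - 1) (filter (\<lambda>x. 0 < (x::nat)) xs)) = filter (\<lambda>x. 0 < x) xs"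
  by (induction xs) auto

lemma filter_pos_Suc: "filter (\<lambda>x. 0 < x) xs = map Suc (map (\<lambda>x. x - 1) (filter (\<lambda>x. 0 < (x::nat)) xs))"
  by (rule filter_pos_Suc'[symmetric])

lemma len_filter_le_sum: "length (filter (\<lambda>x. 0 < x) xs) \<le> sum_list (xs::nat list)"
  by (induction xs) auto

lemma D_decomp: "D b N = emb b ` (SIGMA k:{..min b N}. D k (N - k))"
proof
  show "emb b ` (SIGMA k:{..min b N}. D k (N - k)) \<subseteq> D b N"
  proof
    fix xs assume "xs \<in> emb b ` (SIGMA k:{..min b N}. D k (N - k))"
    then obtain p where p: "p \<in> (SIGMA k:{..min b N}. D k (N - k))" and xp: "xs = emb b p" by blast
    obtain k zs where pk: "p = (k, zs)" by (cases p)
    have k: "k \<le> b" "k \<le> N" and zs: "zs \<in> D k (N - k)" using p pk by auto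
    have xs: "xs = map Suc zs @ replicate (b - k) 0" using xp pk by (simp add: emb_def)
    from zs have l: "length zs = k" and s: "sorted_wrt (\<ge>) zs" and su: "sum_list zs = N - k"
      by (auto simp: D_def)
    have lx: "length xs = b" using xs l k by simp
    have r: "sorted_wrt (\<ge>) (replicate m (0::nat))" for m by (induction m) auto
    have "sorted_wrt (\<ge>) xs" using s r unfolding xs
      by (simp add: sorted_wrt_append sorted_wrt_map)
    moreover have "sum_list xs = N" using xs su l k by (simp add: sum_list_map_Suc)
    ultimately show "xs \<in> D b N" using lx by (simp add: D_def)
  qed
next
  show "D b N \<subseteq> emb b ` (SIGMA k:{..min b N}. D k (N - k))"
  proof
    fix xs assume "xs \<in> D b N"
    then have l: "length xs = b" and s: "sorted_wrt (\<ge>) xs" and su: "sum_list xs = N"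
      by (auto simp: D_def)
    define ys where "ys = filter (\<lambda>x. 0 < x) xs"
    define zs where "zs = map (\<lambda>x. x - 1) ys"
    define k where "k = length ys"
    have ysz: "ys = map Suc zs" unfolding zs_def ys_def by (rule filter_pos_Suc)
    have sp: "xs = ys @ replicate (count_list xs 0) 0" unfolding ys_def by (rule sorted_split[OF s])
    have c0: "count_list xs 0 = b - k" using arg_cong[OF sp, of length] l k_def by simp
    have kb: "k \<le> b" using l k_def ys_def length_filter_le[of "\<lambda>x. 0 < x" xs] by simp
    have kN: "k \<le> N" using len_filter_le_sum[of xs] su k_def ys_def by simp
    have lz: "length zs = k" using zs_def k_def by simp
    have "sum_list ys = N" using arg_cong[OF sp, of sum_list] su by simp
    then have sz: "sum_list zs = N - k" using ysz lz by (simp add: sum_list_map_Suc)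
    have "sorted_wrt (\<ge>) ys" using s ys_def by (simp add: sorted_wrt_filter)
    then have "sorted_wrt (\<ge>) zs" using ysz by (simp add: sorted_wrt_map)
    then have "zs \<in> D k (N - k)" using lz sz by (simp add: D_def)
    moreover have "xs = emb b (k, zs)"
    proof -
      have "xs = map Suc zs @ replicate (b - k) 0" using sp by (simp only: c0 ysz)
      then show ?thesis by (simp add: emb_def)
    qed
    moreover have "(k, zs) \<in> (SIGMA k:{..min b N}. D k (N - k))" using kb kN calculation by simp
    ultimately show "xs \<in> emb b ` (SIGMA k:{..min b N}. D k (N - k))" by blast
  qed
qed

lemma inj_emb: "inj_on (emb b) (SIGMA k:{..min b N}. D k (N - k))"
proof (rule inj_onI)
  fix p q assume p: "p \<in> (SIGMA k:{..min b N}. D k (N - k))" and q: "q \<in> (SIGMA k:{..min b N}. D k (N - k))"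
    and e: "emb b p = emb b q"
  obtain k zs where pk: "p = (k, zs)" by (cases p)
  obtain k' zs' where qk: "q = (k', zs')" by (cases q)
  have "map Suc zs = map Suc zs'"
    using arg_cong[OF e, of "filter (\<lambda>x. 0 < x)"] by (simp add: pk qk emb_def filter_pos_emb)
  then have "zs = zs'" by (simp add: inj_map_eq_map)
  moreover have "length zs = k" "length zs' = k'" using p q pk qk by (auto simp: D_def)
  ultimately show "p = q" using pk qk by simp
qed

lemma npart_snoc: "npart (xs @ [x]) = npart xs + length xs * x"
proof -
  have "npart (xs @ [x]) = (\<Sum>i<length xs. i * (xs @ [x]) ! i) + length xs * x"
    by (simp add: npart_def)
  also have "(\<Sum>i<length xs. i * (xs @ [x]) ! i) = npart xs"
    unfolding npart_def by (rule sum.cong) (auto simp: nth_append)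
  finally show ?thesis .
qed

lemma npart_zeros: "npart (xs @ replicate r 0) = npart xs"
proof (induction r)
  case 0 then show ?case by simp
next
  case (Suc r)
  have "xs @ replicate (Suc r) 0 = (xs @ replicate r 0) @ [0]"
    by (simp add: replicate_append_same[symmetric])
  then show ?case using Suc npart_snoc[of "xs @ replicate r 0" 0] by simp
qed

lemma choose2_Suc: "Suc l choose 2 = (l choose 2) + l"
  by (simp add: numeral_2_eq_2)

lemma npart_Suc: "npart (map Suc zs) = npart zs + (length zs choose 2)"
proof (induction zs rule: rev_induct)
  case Nil then show ?case by (simp add: npart_def)
next
  case (snoc z zs)
  show ?case using snoc npart_snoc[of "map Suc zs" "Suc z"] npart_snoc[of zs z] choose2_Suc[of "length zs"]
    by simp
qed

lemma count_map_Suc_0: "count_list (map Suc zs) 0 = 0"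
  by (induction zs) auto

lemma count_map_Suc: "count_list (map Suc zs) (Suc i) = count_list zs i"
  by (induction zs) auto

lemma count_rep_0: "count_list (replicate r (0::nat)) 0 = r"
  by (induction r) auto

lemma count_rep_Suc: "count_list (replicate r (0::nat)) (Suc i) = 0"
  by (induction r) auto

lemma prod_superset: "set xs \<subseteq> A \<Longrightarrow> finite A \<Longrightarrow>
  (\<Prod>i\<in>A. qpoch t t (count_list xs i)) = (\<Prod>i\<in>set xs. qpoch t t (count_list xs i))"
  by (rule prod.mono_neutral_right) (auto simp: count_list_0_iff)

lemma wt_emb:
  assumes zs: "zs \<in> D k (N - k)" and kb: "k \<le> b" and kN: "k \<le> N"
  shows "wt t (emb b (k, zs)) = t ^ (2 * (k choose 2)) / qpoch t t (b - k) * wt t zs"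
proof -
  define xs where "xs = map Suc zs @ replicate (b - k) 0"
  have l: "length zs = k" and su: "sum_list zs = N - k" using zs by (auto simp: D_def)
  have setz: "set zs \<subseteq> {..N}"
  proof
    fix x assume "x \<in> set zs"
    then have "x \<le> sum_list zs" by (rule member_le_sum_list) simp_all
    then show "x \<in> {..N}" using su by simp
  qed
  have setx: "set xs \<subseteq> {..Suc N}" using setz by (auto simp: xs_def)
  have "(\<Prod>i\<in>set xs. qpoch t t (count_list xs i)) = (\<Prod>i\<le>Suc N. qpoch t t (count_list xs i))"
    by (rule prod_superset[OF setx, symmetric]) simp
  also have "\<dots> = qpoch t t (count_list xs 0) * (\<Prod>i\<le>N. qpoch t t (count_list xs (Suc i)))"
    by (rule prod.atMost_Suc_shift)
  also have "\<dots> = qpoch t t (b - k) * (\<Prod>i\<le>N. qpoch t t (count_list zs i))"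
    by (simp add: xs_def count_map_Suc_0 count_map_Suc count_rep_0 count_rep_Suc)
  also have "(\<Prod>i\<le>N. qpoch t t (count_list zs i)) = (\<Prod>i\<in>set zs. qpoch t t (count_list zs i))"
    by (rule prod_superset[OF setz]) simp
  finally have pr: "(\<Prod>i\<in>set xs. qpoch t t (count_list xs i)) = qpoch t t (b - k) * (\<Prod>i\<in>set zs. qpoch t t (count_list zs i))" .
  have np: "npart xs = npart zs + (k choose 2)"
    using npart_zeros[of "map Suc zs" "b - k"] npart_Suc[of zs] l by (simp add: xs_def)
  have "wt t xs = (t ^ (2 * (k choose 2)) * t ^ (2 * npart zs)) / (qpoch t t (b - k) * (\<Prod>i\<in>set zs. qpoch t t (count_list zs i)))"
    unfolding wt_def pr np by (simp add: power_add algebra_simps)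
  also have "\<dots> = t ^ (2 * (k choose 2)) / qpoch t t (b - k) * wt t zs"
    unfolding wt_def by (rule times_divide_times_eq[symmetric])
  finally show ?thesis by (simp add: xs_def emb_def)
qed

lemma S_rec: "S t b N = (\<Sum>k\<le>min b N. t ^ (2 * (k choose 2)) / qpoch t t (b - k) * S t k (N - k))"
proof -
  have "S t b N = (\<Sum>p\<in>(SIGMA k:{..min b N}. D k (N - k)). wt t (emb b p))"
    unfolding S_def by (subst D_decomp, subst sum.reindex[OF inj_emb]) simp
  also have "\<dots> = (\<Sum>k\<le>min b N. \<Sum>zs\<in>D k (N - k). wt t (emb b (k, zs)))"
    by (subst sum.Sigma) (auto simp: finite_D)
  also have "\<dots> = (\<Sum>k\<le>min b N. \<Sum>zs\<in>D k (N - k). t ^ (2 * (k choose 2)) / qpoch t t (b - k) * wt t zs)"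
    by (rule sum.cong[OF refl], rule sum.cong[OF refl], rule wt_emb) auto
  finally show ?thesis by (simp add: S_def sum_distrib_left)
qed



lemma P_nz: "\<forall>j\<in>{1..n}. t ^ j \<noteq> 1 \<Longrightarrow> j \<le> n \<Longrightarrow> qpoch t t j \<noteq> (0::complex)"
proof -
  assume h: "\<forall>j\<in>{1..n}. t ^ j \<noteq> 1" and jn: "j \<le> n"
  have "\<forall>i\<in>{..<j}. 1 - t * t ^ i \<noteq> 0"
  proof
    fix i assume "i \<in> {..<j}"
    then have "Suc i \<in> {1..n}" using jn by auto
    then have "t ^ Suc i \<noteq> 1" using h by blast
    then show "1 - t * t ^ i \<noteq> 0" by simp
  qed
  then show ?thesis unfolding qpoch_def by (simp add: prod_zero_iff)
qed

lemma P_Suc: "qpoch t t (Suc m) = qpoch t t m * (1 - t ^ Suc m)"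
  by (simp add: qpoch_def)

lemma qbin_div: "\<forall>j\<in>{1..n}. t ^ j \<noteq> 1 \<Longrightarrow> k \<le> n \<Longrightarrow>
   qbin t n k = qpoch t t n / (qpoch t t k * qpoch t t (n - k))"
  using qbin_qpoch[of k n t] P_nz[of n t k] P_nz[of n t "n-k"]
  by (simp add: field_simps)

lemma D0: "D 0 N = (if N = 0 then {[]} else {})"
  by (auto simp: D_def)

lemma S0: "S t 0 N = (if N = 0 then 1 else 0)"
  by (simp add: S_def D0 wt_def npart_def)

lemma two_choose: "2 * (Suc i choose 2) = i * Suc i"
  by (induction i) (simp_all add: choose2_Suc algebra_simps)

lemma S_closed:
  assumes h: "\<forall>j\<in>{1..b}. t ^ j \<noteq> 1" and b1: "1 \<le> b"
  shows "S t b N = qbin t (b + N - 1) (b - 1) / qpoch t t b"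
  using h b1
proof (induction N arbitrary: b rule: less_induct)
  case (less N)
  note h = less.prems(1) and b1 = less.prems(2)
  have Pb: "qpoch t t b \<noteq> 0" using P_nz[OF h] by simp
  show ?case
  proof (cases "N = 0")
    case True
    then show ?thesis using b1 by (subst S_rec) (simp add: S0 numeral_2_eq_2)
  next
    case False
    define T where "T k = t ^ (2 * (k choose 2)) / qpoch t t (b - k) * S t k (N - k)" for k
    define g where "g k = t ^ (2 * (k choose 2)) * qbin t b k * qbin t (N - 1) (k - 1)" for k
    have "S t b N = (\<Sum>k\<le>min b N. T k)" unfolding T_def by (rule S_rec)
    also have "\<dots> = (\<Sum>k\<in>{1..min b N}. T k)"
    proof (rule sum.mono_neutral_right)
      show "\<forall>i\<in>{..min b N} - {1..min b N}. T i = 0"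
      proof
        fix i assume "i \<in> {..min b N} - {1..min b N}"
        then have "i = 0" by auto
        then show "T i = 0" using False by (simp add: T_def S0)
      qed
    qed auto
    also have "\<dots> = (\<Sum>k\<in>{1..min b N}. g k / qpoch t t b)"
    proof (rule sum.cong[OF refl])
      fix k assume k: "k \<in> {1..min b N}"
      have hk: "\<forall>j\<in>{1..k}. t ^ j \<noteq> 1" using h k by auto
      have ih: "S t k (N - k) = qbin t (k + (N - k) - 1) (k - 1) / qpoch t t k"
        using less.IH[of "N - k" k] hk k False by auto
      have e: "k + (N - k) - 1 = N - 1" using k by auto
      have Pk: "qpoch t t k \<noteq> 0" using P_nz[OF h] k by auto
      have Pbk: "qpoch t t (b - k) \<noteq> 0" using P_nz[OF h] k by auto
      have qb: "qbin t b k = qpoch t t b / (qpoch t t k * qpoch t t (b - k))"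
        using qbin_div[OF h] k by auto
      show "T k = g k / qpoch t t b"
        unfolding T_def g_def ih e qb using Pk Pbk Pb by (simp add: field_simps)
    qed
    also have "\<dots> = (\<Sum>k\<in>{1..N}. g k) / qpoch t t b"
    proof -
      have "(\<Sum>k\<in>{1..min b N}. g k) = (\<Sum>k\<in>{1..N}. g k)"
        by (rule sum.mono_neutral_left) (auto simp: g_def qbin_gt)
      then show ?thesis by (simp add: sum_divide_distrib[symmetric])
    qed
    also have "(\<Sum>k\<in>{1..N}. g k) = (\<Sum>i\<le>N - 1. g (Suc i))"
    proof -
      have "{1..N} = {Suc 0..Suc (N - 1)}" using False by auto
      then have "(\<Sum>k\<in>{1..N}. g k) = (\<Sum>i\<in>{0..N-1}. g (Suc i))"
        by (simp only: sum.shift_bounds_cl_Suc_ivl)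
      then show ?thesis by (simp add: atLeast0AtMost)
    qed
    also have "\<dots> = (\<Sum>i\<le>N - 1. t^(i*(1+i)) * qbin t (1 + (b - 1)) (1+i) * qbin t (N - 1) i)"
      using b1 by (simp add: g_def two_choose)
    also have "\<dots> = qbin t (1 + (b - 1) + (N - 1)) (b - 1)"
      by (rule W)
    also have "1 + (b - 1) + (N - 1) = b + N - 1" using b1 False by simp
    finally show ?thesis .
  qed
qed

lemma map_Suc_pred: "\<forall>x\<in>set p. 0 < x \<Longrightarrow> map Suc (map (\<lambda>x. x - 1) p) = (p::nat list)"
  by (induction p) auto

lemma len_le_sum_pos: "\<forall>x\<in>set p. 0 < x \<Longrightarrow> length p \<le> sum_list (p::nat list)"
  by (induction p) auto

lemma parts_decomp: assumes n1: "1 \<le> n" shows "partitions_of n = (\<lambda>(l, zs). map Suc zs) ` (SIGMA l:{1..n}. D l (n - l))"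
proof
  show "partitions_of n \<subseteq> (\<lambda>(l, zs). map Suc zs) ` (SIGMA l:{1..n}. D l (n - l))"
  proof
    fix p assume "p \<in> partitions_of n"
    then have s: "sorted_wrt (\<ge>) p" and pos: "\<forall>x\<in>set p. 0 < x" and su: "sum_list p = n"
      by (auto simp: partitions_of_def)
    define zs where "zs = map (\<lambda>x. x - 1) p"
    have pz: "p = map Suc zs" unfolding zs_def by (rule map_Suc_pred[OF pos, symmetric])
    have ln: "length p \<le> n" using len_le_sum_pos[OF pos] su by simp
    have sz: "sum_list zs = n - length p" using su pz by (simp add: sum_list_map_Suc)
    have "sorted_wrt (\<ge>) zs" using s pz by (simp add: sorted_wrt_map)
    then have zD: "zs \<in> D (length p) (n - length p)" using sz by (simp add: D_def zs_def)
    show "p \<in> (\<lambda>(l, zs). map Suc zs) ` (SIGMA l:{1..n}. D l (n - l))"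
    proof (cases "p = []")
      case True
      then have "n = 0" using su by simp
      then show ?thesis using \<open>1 \<le> n\<close> by simp
    next
      case False
      then have "length p \<in> {1..n}" using ln by (simp add: Suc_le_eq)
      then have "(length p, zs) \<in> (SIGMA l:{1..n}. D l (n - l))" using zD by simp
      then show ?thesis using pz by force
    qed
  qed
next
  show "(\<lambda>(l, zs). map Suc zs) ` (SIGMA l:{1..n}. D l (n - l)) \<subseteq> partitions_of n"
  proof
    fix p assume "p \<in> (\<lambda>(l, zs). map Suc zs) ` (SIGMA l:{1..n}. D l (n - l))"
    then obtain l zs where l: "l \<in> {1..n}" and zs: "zs \<in> D l (n - l)" and p: "p = map Suc zs" by auto
    from zs have "length zs = l" "sorted_wrt (\<ge>) zs" "sum_list zs = n - l" by (auto simp: D_def)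
    then show "p \<in> partitions_of n" using l p by (auto simp: partitions_of_def sorted_wrt_map sum_list_map_Suc)
  qed
qed

lemma inj_parts: "inj_on (\<lambda>(l, zs). map Suc zs) (SIGMA l:{1..n}. D l (n - l))"
proof (rule inj_onI)
  fix p q assume p: "p \<in> (SIGMA l:{1..n}. D l (n - l))" and q: "q \<in> (SIGMA l:{1..n}. D l (n - l))"
    and e: "(\<lambda>(l, zs). map Suc zs) p = (\<lambda>(l, zs). map Suc zs) q"
  obtain k zs where pk: "p = (k, zs)" by (cases p)
  obtain k' zs' where qk: "q = (k', zs')" by (cases q)
  have "zs = zs'" using e pk qk by (simp add: inj_map_eq_map)
  moreover have "length zs = k" "length zs' = k'" using p q pk qk by (auto simp: D_def)
  ultimately show "p = q" using pk qk by simp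
qed

lemma inv_fact: "u \<noteq> 0 \<Longrightarrow> (1 - inverse u * y) * u = u - (y::complex)"
proof -
  assume u: "u \<noteq> 0"
  have "(1 - inverse u * y) * u = u - y * (inverse u * u)" by (simp add: algebra_simps)
  also have "inverse u * u = 1" using u by simp
  finally show ?thesis by simp
qed

lemma Qu: "u \<noteq> (0::complex) \<Longrightarrow> qpoch (inverse u) t l * u ^ l = (\<Prod>i<l. (u - t ^ i))"
proof -
  assume u: "u \<noteq> 0"
  have "qpoch (inverse u) t l * u ^ l = (\<Prod>i<l. (1 - inverse u * t ^ i)) * (\<Prod>i<l. u)"
    by (simp add: qpoch_def)
  also have "\<dots> = (\<Prod>i<l. (1 - inverse u * t ^ i) * u)" by (simp add: prod.distrib)
  also have "\<dots> = (\<Prod>i<l. (u - t ^ i))"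
    by (rule prod.cong[OF refl]) (rule inv_fact[OF u])
  finally show ?thesis .
qed

lemma ratio:
  assumes h: "\<forall>j\<in>{1..n}. t ^ j \<noteq> 1" and l: "l \<in> {1..n}"
  shows "qpoch t t (l - 1) * qbin t (n - 1) (l - 1) / qpoch t t l = qbin t n l / (1 - t ^ n)"
proof -
  have hn1: "\<forall>j\<in>{1..n-1}. t ^ j \<noteq> 1" using h by auto
  have a: "qbin t (n - 1) (l - 1) = qpoch t t (n - 1) / (qpoch t t (l - 1) * qpoch t t (n - l))"
    using qbin_div[OF hn1, of "l - 1"] l by auto
  have b: "qbin t n l = qpoch t t n / (qpoch t t l * qpoch t t (n - l))"
    using qbin_div[OF h, of l] l by auto
  have c: "qpoch t t n = qpoch t t (n - 1) * (1 - t ^ n)"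
    using P_Suc[of t "n - 1"] l by (cases n) auto
  have tn: "1 - t ^ n \<noteq> 0" using h l by auto
  have "l - 1 \<le> n" using l by auto
  then have p1: "qpoch t t (l - 1) \<noteq> 0" using P_nz[OF h, of "l - 1"] by simp
  have p2: "qpoch t t (n - l) \<noteq> 0" using P_nz[OF h, of "n - l"] by simp
  have p3: "qpoch t t l \<noteq> 0" using P_nz[OF h, of l] l by simp
  show ?thesis unfolding a b c using tn p1 p2 p3 by (simp add: field_simps)
qed

theorem mainTheorem10:
  fixes t u :: complex and n :: nat
  assumes "n \<ge> 1"
    and "u \<noteq> 0"
    and "\<forall>k\<in>{1..n}. t ^ k \<noteq> 1"
  shows "(\<Sum>p\<in>partitions_of n.
           t ^ (2 * npart p - 2 * (length p choose 2))
           * (qpoch t t (length p - 1) * qpoch (inverse u) t (length p)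
              / (\<Prod>i\<in>{1..n}. qpoch t t (mult_part p i)))
           * u ^ length p)
         = (u ^ n - 1) / (1 - t ^ n)"
proof -
  note n1 = assms(1) and u = assms(2) and h = assms(3)
  define F where "F p = t ^ (2 * npart p - 2 * (length p choose 2))
           * (qpoch t t (length p - 1) * qpoch (inverse u) t (length p)
              / (\<Prod>i\<in>{1..n}. qpoch t t (mult_part p i)))
           * u ^ length p" for p
  define Q where "Q l = (\<Prod>i<l. (u - t ^ i))" for l
  have Fe: "F (map Suc zs) = qpoch t t (l - 1) * Q l * wt t zs" if l: "l \<in> {1..n}" and zs: "zs \<in> D l (n - l)" for l zs
  proof -
    have lz: "length zs = l" and su: "sum_list zs = n - l" using zs by (auto simp: D_def)
    have setz: "set zs \<subseteq> {0..n-1}"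
    proof
      fix x assume "x \<in> set zs"
      then have "x \<le> sum_list zs" by (rule member_le_sum_list) simp_all
      then show "x \<in> {0..n-1}" using su l by auto
    qed
    have "(\<Prod>i\<in>{1..n}. qpoch t t (mult_part (map Suc zs) i)) = (\<Prod>i\<in>{0..n-1}. qpoch t t (mult_part (map Suc zs) (Suc i)))"
    proof -
      have "{1..n} = {Suc 0..Suc (n - 1)}" using n1 by auto
      then show ?thesis by (simp only: prod.shift_bounds_cl_Suc_ivl)
    qed
    also have "\<dots> = (\<Prod>i\<in>{0..n-1}. qpoch t t (count_list zs i))"
      by (simp add: mult_part_def count_map_Suc)
    also have "\<dots> = (\<Prod>i\<in>set zs. qpoch t t (count_list zs i))"
      by (rule prod_superset[OF setz]) simp
    finally have pr: "(\<Prod>i\<in>{1..n}. qpoch t t (mult_part (map Suc zs) i)) = (\<Prod>i\<in>set zs. qpoch t t (count_list zs i))" .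
    have np: "2 * npart (map Suc zs) - 2 * (length (map Suc zs) choose 2) = 2 * npart zs"
      using npart_Suc[of zs] by simp
    have "F (map Suc zs) = t ^ (2 * npart zs) * (qpoch t t (l - 1) * qpoch (inverse u) t l
              / (\<Prod>i\<in>set zs. qpoch t t (count_list zs i))) * u ^ l"
      unfolding F_def np pr using lz by simp
    also have "\<dots> = qpoch t t (l - 1) * (qpoch (inverse u) t l * u ^ l) * wt t zs"
      by (simp add: wt_def divide_inverse ac_simps)
    finally show ?thesis using Qu[OF u, of t l] by (simp add: Q_def)
  qed
  have "(\<Sum>p\<in>partitions_of n. F p) = (\<Sum>(l, zs)\<in>(SIGMA l:{1..n}. D l (n - l)). F (map Suc zs))"
    by (subst parts_decomp[OF n1], subst sum.reindex[OF inj_parts]) (auto intro!: sum.cong)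
  also have "\<dots> = (\<Sum>l\<in>{1..n}. \<Sum>zs\<in>D l (n - l). F (map Suc zs))"
    by (subst sum.Sigma) (auto simp: finite_D)
  also have "\<dots> = (\<Sum>l\<in>{1..n}. \<Sum>zs\<in>D l (n - l). qpoch t t (l - 1) * Q l * wt t zs)"
    by (rule sum.cong[OF refl], rule sum.cong[OF refl], rule Fe) auto
  also have "\<dots> = (\<Sum>l\<in>{1..n}. qpoch t t (l - 1) * Q l * S t l (n - l))"
    by (simp add: S_def sum_distrib_left)
  also have "\<dots> = (\<Sum>l\<in>{1..n}. qbin t n l * Q l / (1 - t ^ n))"
  proof (rule sum.cong[OF refl])
    fix l assume l: "l \<in> {1..n}"
    have hl: "\<forall>j\<in>{1..l}. t ^ j \<noteq> 1" using h l by auto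
    have "S t l (n - l) = qbin t (n - 1) (l - 1) / qpoch t t l"
      using S_closed[OF hl, of "n - l"] l by auto
    then show "qpoch t t (l - 1) * Q l * S t l (n - l) = qbin t n l * Q l / (1 - t ^ n)"
      using ratio[OF h l] by (simp add: divide_inverse ac_simps)
  qed
  also have "\<dots> = (\<Sum>l\<in>{1..n}. qbin t n l * Q l) / (1 - t ^ n)"
    by (simp add: sum_divide_distrib)
  also have "(\<Sum>l\<in>{1..n}. qbin t n l * Q l) = u ^ n - 1"
  proof -
    have "u ^ n = (\<Sum>k\<le>n. qbin t n k * Q k)" unfolding Q_def by (rule gauss)
    also have "{..n} = insert 0 {1..n}" by auto
    finally show ?thesis by (simp add: Q_def)
  qed
  finally show ?thesis unfolding F_def .
qed

end
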